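(* Let $\beta\in(0,\tfrac12)$, let $\lambda$ be an eigenvalue of $\Delta_\beta$, and let $\theta\in\mathcal{A}_\beta$. Then $\lambda\ge\theta$.
   Context: Tree: for an integer $m\ge2$, $\mathbb{T}_m$ has vertices the root $\emptyset$ and all finite sequences $(\emptyset,a_1,\dots,a_k)$, $a_i\in\{0,\dots,m-1\}$; $|x|$ is the level, successors of $x$ are $(x,i)$, $\hat x$ is the immediate predecessor of $x\ne\emptyset$. A branch is an infinite sequence $(x_n)_{n\ge0}$ with $x_0=\emptyset$, $x_{n+1}$ a successor of $x_n$; $\lim_{x\to y}u(x)=\lim_n u(x_n)$ for a branch $y=(x_n)$. Operator: $p_\beta=\beta/(1-\beta)$ for $\beta\in(0,1)$. $\Delta_\beta u(\emptyset)=\frac1m\sum_{i=0}^{m-1}u(\emptyset,i)-u(\emptyset)$ and, for $x\ne\emptyset$, $\Delta_\beta u(x)=\big(\beta u(\hat x)+\frac{1-\beta}{m}\sum_{i=0}^{m-1}u(x,i)-u(x)\big)p_\beta^{-|x|}$. Eigenvalues: $\lambda\in\mathbb{R}$ is an eigenvalue of $\Delta_\beta$ if there is a bounded $u\not\equiv0$ with $-\Delta_\beta u=\lambda u$ on $\mathbb{T}_m$ and $\lim_{x\to y}u(x)=0$ for every branch $y$. $\mathcal{A}_\beta=\{\lambda>0:\exists v:\mathbb{T}_m\to\mathbb{R}\text{ and constants }0<c<C\text{ with } c<v<C \text{ and } \Delta_\beta v+\lambda v\le0 \text{ on }\mathbb{T}_m\}$. *)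

theory Defs
  imports "HOL-Analysis.Analysis"
begin

text \<open>Vertices of the m-ary tree T_m: the vertex (root, a_1, ..., a_k) is encoded as the
  list [a_1, ..., a_k] with all a_i < m; the root is the empty list. The level |x| is the
  length, the i-th successor of x is x @ [i], and the predecessor of x is butlast x.\<close>

definition vertices :: "nat \<Rightarrow> nat list set" where
  "vertices m = {xs. \<forall>a\<in>set xs. a < m}"

definition p_beta :: "real \<Rightarrow> real" where
  "p_beta \<beta> = \<beta> / (1 - \<beta>)"

definition Delta :: "nat \<Rightarrow> real \<Rightarrow> (nat list \<Rightarrow> real) \<Rightarrow> nat list \<Rightarrow> real" where
  "Delta m \<beta> u x =
     (if x = [] then (1 / real m) * (\<Sum>i<m. u [i]) - u []
      else (\<beta> * u (butlast x) + ((1 - \<beta>) / real m) * (\<Sum>i<m. u (x @ [i])) - u x)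
           / (p_beta \<beta>) ^ length x)"

text \<open>A branch is given by a sequence b of digits b n < m; its n-th vertex is
  map b [0..<n]. The limit of u along the branch is the limit of u at these vertices.\<close>

definition is_branch :: "nat \<Rightarrow> (nat \<Rightarrow> nat) \<Rightarrow> bool" where
  "is_branch m b \<longleftrightarrow> (\<forall>n. b n < m)"

definition is_eigenvalue :: "nat \<Rightarrow> real \<Rightarrow> real \<Rightarrow> bool" where
  "is_eigenvalue m \<beta> lam \<longleftrightarrow>
     (\<exists>u :: nat list \<Rightarrow> real.
        (\<exists>C. \<forall>x\<in>vertices m. \<bar>u x\<bar> \<le> C)
      \<and> (\<exists>x\<in>vertices m. u x \<noteq> 0)
      \<and> (\<forall>x\<in>vertices m. - Delta m \<beta> u x = lam * u x)
      \<and> (\<forall>b. is_branch m b \<longrightarrow> (\<lambda>n. u (map b [0..<n])) \<longlonglongrightarrow> 0))"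

definition A_set :: "nat \<Rightarrow> real \<Rightarrow> real set" where
  "A_set m \<beta> = {lam. lam > 0 \<and>
     (\<exists>v :: nat list \<Rightarrow> real. \<exists>c C. 0 < c \<and> c < C \<and>
        (\<forall>x\<in>vertices m. c < v x \<and> v x < C \<and> Delta m \<beta> v x + lam * v x \<le> 0))}"

end

theory Submission imports Defs begin

lemma vert_butlast: "x \<in> vertices m \<Longrightarrow> butlast x \<in> vertices m"
  unfolding vertices_def by (auto dest: in_set_butlastD)
lemma vert_app: "x \<in> vertices m \<Longrightarrow> i < m \<Longrightarrow> x @ [i] \<in> vertices m"
  unfolding vertices_def by auto

lemma step:
  fixes u v :: "nat list \<Rightarrow> real"
  assumes m: "m \<ge> 1" and b0: "0 < \<beta>" and b1: "\<beta> < 1" and lt: "lam < \<theta>"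
    and vpos: "\<forall>x\<in>vertices m. 0 < v x"
    and vsup: "\<forall>x\<in>vertices m. Delta m \<beta> v x + \<theta> * v x \<le> 0"
    and ueq: "\<forall>x\<in>vertices m. - Delta m \<beta> u x = lam * u x"
    and x: "x \<in> vertices m" and fx: "u x / v x > 0"
  shows "\<exists>y. y \<in> vertices m \<and> u y / v y > u x / v x \<and> ((x \<noteq> [] \<and> y = butlast x) \<or> (\<exists>i<m. y = x @ [i]))"
proof (rule ccontr)
  assume nn: "\<not> ?thesis"
  define t where "t = u x / v x"
  have vx: "v x > 0" using vpos x by auto
  have ux: "u x = t * v x" using vx by (simp add: t_def)
  have tpos: "t > 0" using fx t_def by simp
  have tv: "t * v x > 0" using tpos vx by simp
  have ch: "u (x @ [i]) \<le> t * v (x @ [i])" if "i < m" for i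
  proof -
    have y: "x @ [i] \<in> vertices m" using vert_app[OF x that] .
    have "\<not> u (x@[i]) / v (x@[i]) > t" using nn y that t_def by blast
    moreover have "v (x@[i]) > 0" using vpos y by auto
    ultimately show ?thesis by (simp add: not_less pos_divide_le_eq)
  qed
  have sumle: "(\<Sum>i<m. u (x @ [i])) \<le> t * (\<Sum>i<m. v (x @ [i]))"
    unfolding sum_distrib_left by (rule sum_mono) (simp add: ch)
  have mpos: "real m > 0" using m by simp
  define Su where "Su = (\<Sum>i<m. u (x @ [i]))"
  define Sv where "Sv = (\<Sum>i<m. v (x @ [i]))"
  have sumle': "Su / real m \<le> t * (Sv / real m)" using sumle mpos unfolding Su_def Sv_def
    by (simp add: divide_right_mono)
  show False
  proof (cases "x = []")
    case True
    have e1: "- (Su / real m - u x) = lam * u x" using ueq[rule_format, OF x] True unfolding Su_def by (simp add: Delta_def)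
    have e2: "Sv / real m - v x + \<theta> * v x \<le> 0" using vsup[rule_format, OF x] True unfolding Sv_def by (simp add: Delta_def)
    have "t * (Sv / real m) \<le> t * ((1 - \<theta>) * v x)" using e2 tpos by (intro mult_left_mono) (auto simp: algebra_simps)
    hence "(1 - lam) * (t * v x) \<le> (1 - \<theta>) * (t * v x)" using e1 sumle' ux by (simp add: algebra_simps)
    hence "(\<theta> - lam) * (t * v x) \<le> 0" by (simp add: algebra_simps)
    moreover have "(\<theta> - lam) * (t * v x) > 0" using lt tv by simp
    ultimately show False by simp
  next
    case False
    define P where "P = p_beta \<beta> ^ length x"
    have P: "P > 0" unfolding P_def p_beta_def using b0 b1 by simp
    have bx: "butlast x \<in> vertices m" using vert_butlast[OF x] .
    have par: "u (butlast x) \<le> t * v (butlast x)"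
    proof -
      have "\<not> u (butlast x) / v (butlast x) > t" using nn bx False t_def by blast
      moreover have "v (butlast x) > 0" using vpos bx by auto
      ultimately show ?thesis by (simp add: not_less pos_divide_le_eq)
    qed
    have e1: "- ((\<beta> * u (butlast x) + ((1 - \<beta>) / real m) * Su - u x) / P) = lam * u x"
      using ueq[rule_format, OF x] False unfolding Su_def P_def by (simp add: Delta_def)
    have e2: "(\<beta> * v (butlast x) + ((1 - \<beta>) / real m) * Sv - v x) / P + \<theta> * v x \<le> 0"
      using vsup[rule_format, OF x] False unfolding Sv_def P_def by (simp add: Delta_def)
    have e1': "\<beta> * u (butlast x) + ((1 - \<beta>) / real m) * Su - u x = - (lam * P * u x)"
      using e1 P by (simp add: field_simps)
    have e2': "\<beta> * v (butlast x) + ((1 - \<beta>) / real m) * Sv - v x \<le> - (\<theta> * P * v x)"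
      using e2 P by (simp add: field_simps)
    have a1: "\<beta> * u (butlast x) \<le> t * (\<beta> * v (butlast x))" using par b0
      by (metis mult.left_commute mult_le_cancel_left_pos)
    have a2: "((1 - \<beta>) / real m) * Su \<le> t * (((1 - \<beta>) / real m) * Sv)"
    proof -
      have "(1 - \<beta>) * (Su / real m) \<le> (1 - \<beta>) * (t * (Sv / real m))" using sumle' b1 by (intro mult_left_mono) auto
      thus ?thesis by (simp add: algebra_simps)
    qed
    have a3: "t * (\<beta> * v (butlast x) + ((1 - \<beta>) / real m) * Sv) \<le> t * (v x - \<theta> * P * v x)"
      using e2' tpos by (intro mult_left_mono) auto
    have "u x - lam * P * u x \<le> u x - \<theta> * P * u x" using a1 a2 a3 e1' ux by (simp add: algebra_simps)
    hence "(\<theta> - lam) * (P * (t * v x)) \<le> 0" using ux by (simp add: algebra_simps)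
    moreover have "(\<theta> - lam) * (P * (t * v x)) > 0" using lt tv P by simp
    ultimately show False by simp
  qed
qed

lemma core:
  fixes u v :: "nat list \<Rightarrow> real"
  assumes m: "m \<ge> 1" and b0: "0 < \<beta>" and b1: "\<beta> < 1" and lt: "lam < \<theta>"
    and c: "0 < c" and vpos: "\<forall>x\<in>vertices m. c < v x"
    and vsup: "\<forall>x\<in>vertices m. Delta m \<beta> v x + \<theta> * v x \<le> 0"
    and ueq: "\<forall>x\<in>vertices m. - Delta m \<beta> u x = lam * u x"
    and br: "\<forall>b. is_branch m b \<longrightarrow> (\<lambda>n. u (map b [0..<n])) \<longlonglongrightarrow> 0"
    and x0: "x0 \<in> vertices m" and ux0: "u x0 > 0"
  shows False
proof -
  define f where "f = (\<lambda>x. u x / v x)"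
  have vp: "\<forall>x\<in>vertices m. 0 < v x" using vpos c by force
  have "\<forall>x. \<exists>y. x \<in> vertices m \<and> f x > 0 \<longrightarrow> (y \<in> vertices m \<and> f y > f x \<and> ((x \<noteq> [] \<and> y = butlast x) \<or> (\<exists>i<m. y = x @ [i])))"
    using step[OF m b0 b1 lt vp vsup ueq] unfolding f_def by blast
  then obtain g where g: "\<And>x. x \<in> vertices m \<Longrightarrow> f x > 0 \<Longrightarrow> g x \<in> vertices m \<and> f (g x) > f x \<and> ((x \<noteq> [] \<and> g x = butlast x) \<or> (\<exists>i<m. g x = x @ [i]))"
    by metis
  define s where "s n = (g ^^ n) x0" for n
  have sS: "s (Suc n) = g (s n)" for n by (simp add: s_def)
  have f0: "f x0 > 0" using ux0 vp x0 unfolding f_def by simp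
  have inv: "s n \<in> vertices m \<and> f (s n) \<ge> f x0" for n
  proof (induction n)
    case 0 thus ?case by (simp add: s_def x0)
  next
    case (Suc n)
    hence "f (s n) > 0" using f0 by linarith
    thus ?case using g[of "s n"] Suc sS by force
  qed
  have stepn: "s (Suc n) \<in> vertices m \<and> f (s (Suc n)) > f (s n) \<and> ((s n \<noteq> [] \<and> s (Suc n) = butlast (s n)) \<or> (\<exists>i<m. s (Suc n) = s n @ [i]))" for n
  proof -
    have "f (s n) > 0" using inv[of n] f0 by linarith
    thus ?thesis using g[of "s n"] inv[of n] sS by simp
  qed
  define down where "down n \<longleftrightarrow> (\<exists>i<m. s (Suc n) = s n @ [i])" for n
  have downSuc: "down (Suc n)" if "down n" for n
  proof (rule ccontr)
    assume "\<not> down (Suc n)"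
    hence "s (Suc (Suc n)) = butlast (s (Suc n))" using stepn[of "Suc n"] down_def by blast
    hence "s (Suc (Suc n)) = s n" using that down_def by auto
    thus False using stepn[of n] stepn[of "Suc n"] by simp
  qed
  define L0 where "L0 = length x0"
  have updec: "(\<forall>j<n. \<not> down j) \<Longrightarrow> length (s n) + n = L0" if "n \<le> L0" for n
    using that
  proof (induction n)
    case 0 thus ?case by (simp add: s_def L0_def)
  next
    case (Suc n)
    have "s n \<noteq> [] \<and> s (Suc n) = butlast (s n)" using stepn[of n] Suc.prems down_def by blast
    thus ?case using Suc by auto
  qed
  have "\<exists>N. down N"
  proof (rule ccontr)
    assume "\<not> (\<exists>N. down N)"
    hence "length (s L0) = 0" using updec[of L0] by auto
    moreover have "s L0 \<noteq> []" using stepn[of L0] \<open>\<not> (\<exists>N. down N)\<close> down_def by blast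
    ultimately show False by simp
  qed
  then obtain N where N: "down N" by blast
  have downall: "down (N + j)" for j by (induction j) (use N downSuc in auto)
  have pre: "\<exists>ds. s (N + j + d) = s (N + j) @ ds \<and> length ds = d" for j d
  proof (induction d)
    case 0 thus ?case by simp
  next
    case (Suc d)
    then obtain ds where ds: "s (N + j + d) = s (N + j) @ ds" "length ds = d" by blast
    from downall[of "j + d"] obtain i where "s (Suc (N + j + d)) = s (N + j + d) @ [i]"
      unfolding down_def by (auto simp: add.assoc)
    thus ?case using ds by (intro exI[of _ "ds @ [i]"]) auto
  qed
  define L where "L = length (s N)"
  have lenj: "length (s (N + j)) = L + j" for j using pre[of 0 j] L_def by auto
  define b where "b k = s (N + (Suc k - L)) ! k" for k
  have mapb: "map b [0..<L + j] = s (N + j)" for j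
  proof (rule nth_equalityI)
    show "length (map b [0..<L + j]) = length (s (N + j))" using lenj by simp
  next
    fix k assume "k < length (map b [0..<L + j])"
    hence k: "k < L + j" by simp
    define j' where "j' = Suc k - L"
    have jj: "j' \<le> j" using k j'_def by simp
    obtain ds where ds: "s (N + j' + (j - j')) = s (N + j') @ ds" using pre by blast
    have "s (N + j) = s (N + j') @ ds" using ds jj by simp
    moreover have "k < length (s (N + j'))" using lenj[of j'] j'_def by simp
    ultimately show "map b [0..<L + j] ! k = s (N + j) ! k"
      using k by (simp add: b_def j'_def nth_append)
  qed
  have isb: "is_branch m b"
    unfolding is_branch_def
  proof
    fix k
    have "map b [0..<L + (Suc k)] \<in> vertices m" unfolding mapb using inv by blast
    hence "\<forall>a\<in>set (map b [0..<L + Suc k]). a < m" by (simp add: vertices_def)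
    thus "b k < m" by auto
  qed
  have "(\<lambda>n. u (map b [0..<n])) \<longlonglongrightarrow> 0" using br isb by blast
  hence "(\<lambda>j. u (map b [0..<j + L])) \<longlonglongrightarrow> 0" by (rule LIMSEQ_ignore_initial_segment)
  hence lim: "(\<lambda>j. u (s (N + j))) \<longlonglongrightarrow> 0" using mapb by (simp add: add.commute)
  have lb: "f x0 * c \<le> u (s (N + j))" for j
  proof -
    have vs: "v (s (N + j)) > c" using vpos inv by blast
    have "f x0 \<le> f (s (N + j))" using inv by blast
    hence "f x0 * v (s (N + j)) \<le> u (s (N + j))" using vs c unfolding f_def
      by (simp add: pos_le_divide_eq)
    moreover have "f x0 * c \<le> f x0 * v (s (N + j))" using vs f0 by simp
    ultimately show ?thesis by linarith
  qed
  have "f x0 * c \<le> 0" using lim lb by (intro LIMSEQ_le_const) auto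
  moreover have "f x0 * c > 0" using f0 c by simp
  ultimately show False by linarith
qed

lemma Delta_neg: "Delta m \<beta> (\<lambda>y. - u y) x = - Delta m \<beta> u x"
proof -
  have "(\<Sum>i<m. - u (x @ [i])) = - (\<Sum>i<m. u (x @ [i]))" by (rule sum_negf)
  moreover have "(\<Sum>i<m. - u [i]) = - (\<Sum>i<m. u [i])" by (rule sum_negf)
  ultimately show ?thesis unfolding Delta_def
    by (simp add: diff_divide_distrib add_divide_distrib algebra_simps)
qed

theorem lemma5p2:
  fixes m :: nat and \<beta> lam \<theta> :: real
  assumes "m \<ge> 2"
    and "0 < \<beta>" and "\<beta> < 1 / 2"
    and "is_eigenvalue m \<beta> lam"
    and "\<theta> \<in> A_set m \<beta>"
  shows "lam \<ge> \<theta>"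
proof (rule ccontr)
  assume "\<not> lam \<ge> \<theta>"
  hence lt: "lam < \<theta>" by simp
  have m: "m \<ge> 1" using assms(1) by simp
  have b1: "\<beta> < 1" using assms(3) by simp
  obtain u where ueq: "\<forall>x\<in>vertices m. - Delta m \<beta> u x = lam * u x"
    and br: "\<forall>b. is_branch m b \<longrightarrow> (\<lambda>n. u (map b [0..<n])) \<longlonglongrightarrow> 0"
    and nz: "\<exists>x\<in>vertices m. u x \<noteq> 0"
    using assms(4) unfolding is_eigenvalue_def by blast
  obtain v c C where c: "0 < c" and vv: "\<forall>x\<in>vertices m. c < v x \<and> v x < C \<and> Delta m \<beta> v x + \<theta> * v x \<le> 0"
    using assms(5) unfolding A_set_def by blast
  have vpos: "\<forall>x\<in>vertices m. c < v x" and vsup: "\<forall>x\<in>vertices m. Delta m \<beta> v x + \<theta> * v x \<le> 0"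
    using vv by auto
  obtain x0 where x0: "x0 \<in> vertices m" and ux: "u x0 \<noteq> 0" using nz by blast
  show False
  proof (cases "u x0 > 0")
    case True
    show False by (rule core[OF m assms(2) b1 lt c vpos vsup ueq br x0 True])
  next
    case False
    hence pos: "(\<lambda>y. - u y) x0 > 0" using ux by simp
    have ueq': "\<forall>x\<in>vertices m. - Delta m \<beta> (\<lambda>y. - u y) x = lam * (\<lambda>y. - u y) x"
      using ueq by (simp add: Delta_neg)
    have br': "\<forall>b. is_branch m b \<longrightarrow> (\<lambda>n. (\<lambda>y. - u y) (map b [0..<n])) \<longlonglongrightarrow> 0"
      using br tendsto_minus[of _ 0] by force
    show False by (rule core[OF m assms(2) b1 lt c vpos vsup ueq' br' x0 pos])
  qed
qed

end
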